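(* Let $(\mathbb S,+,\cdot)$ be an S-Ring. Then $0\neq 1$.
   Context: An S-Structure is a triple $(\mathbb S,+,\cdot)$ where $\mathbb S$ is a set and $+,\cdot$ are binary operations on $\mathbb S$ such that: $(\mathbb S,+)$ is a commutative group with identity $0$ (the inverse of $s$ is written $-s$, and $s-t:=s+(-t)$); $\mathbb S$ is closed under $\cdot$; and there exists $s\in\mathbb S$ with $0\cdot s\neq 0$ or $s\cdot 0\neq 0$. Multiplication binds tighter than addition. The structures considered come with a distinguished element of $\mathbb S$ denoted $1$. It is Commutative if $s\cdot t=t\cdot s$ for all $s,t$. For a Commutative S-Structure and $\alpha\in\mathbb S$, put $\mathbb S_\alpha=\{s\in\mathbb S:0\cdot s=s\cdot 0=\alpha\}$ and $\Lambda=\{\alpha\in\mathbb S:\mathbb S_\alpha\neq\emptyset\}$. Wheel Distributive: $s\cdot(t+r)+(s\cdot 0)=(s\cdot t)+(s\cdot r)$ for all $s,t,r\in\mathbb S$. S-Associative: for all $m,n\in\mathbb S_0$ and $s\in\mathbb S$, $m\cdot(n\cdot s)=(m\cdot n)\cdot s-([(m-1)\cdot(n-1)]\cdot(0\cdot s))$. Base: if $\mathbb S_0\neq\emptyset$ and $\alpha\in\Lambda$, $q\in\mathbb S_\alpha$ is a Base for $\mathbb S_\alpha$ if $q+\beta\in\mathbb S_\alpha$ for all $\beta\in\mathbb S_0$ and every $s\in\mathbb S_\alpha$ equals $q+\beta$ for some $\beta\in\mathbb S_0$. Coordinated: $\mathbb S_0\neq\emptyset$ and every $\mathbb S_\alpha$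 with $\alpha\in\Lambda$ has a Base. Standard Bases: a Coordinated Commutative S-Structure has Standard Bases if there is a specified element $q_0(1)\in\mathbb S_1$ which is a Base for $\mathbb S_1$, and for every $\alpha\in\Lambda$ the element $q_0(\alpha):=\alpha\cdot(q_0(1)+1)-1$ lies in $\mathbb S_\alpha$ and is a Base for $\mathbb S_\alpha$. An Essential S-Structure is an S-Structure that is Commutative, Wheel Distributive, S-Associative, has Standard Bases (in particular is Coordinated), satisfies $0,1\in\mathbb S_0$, and satisfies $\mathbb S_0=\{1\cdot x:x\in\mathbb S_0\}$. A Unity is an element $e\in\Lambda$ with $e\cdot s=s\cdot e=s$ for all $s\in\mathbb S$. An S-Ring is an Essential S-Structure which has a Unity. *)

theory Defs
  imports Main
begin

definition comm_group_on :: "'a set \<Rightarrow> ('a \<Rightarrow> 'a \<Rightarrow> 'a) \<Rightarrow> 'a \<Rightarrow> bool" where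
  "comm_group_on S add zero \<longleftrightarrow>
     zero \<in> S \<and>
     (\<forall>s\<in>S. \<forall>t\<in>S. add s t \<in> S) \<and>
     (\<forall>s\<in>S. \<forall>t\<in>S. \<forall>r\<in>S. add (add s t) r = add s (add t r)) \<and>
     (\<forall>s\<in>S. \<forall>t\<in>S. add s t = add t s) \<and>
     (\<forall>s\<in>S. add zero s = s \<and> add s zero = s) \<and>
     (\<forall>s\<in>S. \<exists>t\<in>S. add s t = zero)"

definition sneg :: "'a set \<Rightarrow> ('a \<Rightarrow> 'a \<Rightarrow> 'a) \<Rightarrow> 'a \<Rightarrow> 'a \<Rightarrow> 'a" where
  "sneg S add zero s = (THE t. t \<in> S \<and> add s t = zero)"

definition ssub :: "'a set \<Rightarrow> ('a \<Rightarrow> 'a \<Rightarrow> 'a) \<Rightarrow> 'a \<Rightarrow> 'a \<Rightarrow> 'a \<Rightarrow> 'a" where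
  "ssub S add zero s t = add s (sneg S add zero t)"

definition S_structure :: "'a set \<Rightarrow> ('a \<Rightarrow> 'a \<Rightarrow> 'a) \<Rightarrow> ('a \<Rightarrow> 'a \<Rightarrow> 'a) \<Rightarrow> 'a \<Rightarrow> bool" where
  "S_structure S add mul zero \<longleftrightarrow>
     comm_group_on S add zero \<and>
     (\<forall>s\<in>S. \<forall>t\<in>S. mul s t \<in> S) \<and>
     (\<exists>s\<in>S. mul zero s \<noteq> zero \<or> mul s zero \<noteq> zero)"

definition S_commutative :: "'a set \<Rightarrow> ('a \<Rightarrow> 'a \<Rightarrow> 'a) \<Rightarrow> bool" where
  "S_commutative S mul \<longleftrightarrow> (\<forall>s\<in>S. \<forall>t\<in>S. mul s t = mul t s)"

definition S_alpha :: "'a set \<Rightarrow> ('a \<Rightarrow> 'a \<Rightarrow> 'a) \<Rightarrow> 'a \<Rightarrow> 'a \<Rightarrow> 'a set" where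
  "S_alpha S mul zero \<alpha> = {s \<in> S. mul zero s = \<alpha> \<and> mul s zero = \<alpha>}"

definition S_Lambda :: "'a set \<Rightarrow> ('a \<Rightarrow> 'a \<Rightarrow> 'a) \<Rightarrow> 'a \<Rightarrow> 'a set" where
  "S_Lambda S mul zero = {\<alpha> \<in> S. S_alpha S mul zero \<alpha> \<noteq> {}}"

definition wheel_distributive :: "'a set \<Rightarrow> ('a \<Rightarrow> 'a \<Rightarrow> 'a) \<Rightarrow> ('a \<Rightarrow> 'a \<Rightarrow> 'a) \<Rightarrow> 'a \<Rightarrow> bool" where
  "wheel_distributive S add mul zero \<longleftrightarrow>
     (\<forall>s\<in>S. \<forall>t\<in>S. \<forall>r\<in>S. add (mul s (add t r)) (mul s zero) = add (mul s t) (mul s r))"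

definition S_associative :: "'a set \<Rightarrow> ('a \<Rightarrow> 'a \<Rightarrow> 'a) \<Rightarrow> ('a \<Rightarrow> 'a \<Rightarrow> 'a) \<Rightarrow> 'a \<Rightarrow> 'a \<Rightarrow> bool" where
  "S_associative S add mul zero one \<longleftrightarrow>
     (\<forall>m\<in>S_alpha S mul zero zero. \<forall>n\<in>S_alpha S mul zero zero. \<forall>s\<in>S.
        mul m (mul n s) =
        ssub S add zero (mul (mul m n) s)
          (mul (mul (ssub S add zero m one) (ssub S add zero n one)) (mul zero s)))"

definition is_base :: "'a set \<Rightarrow> ('a \<Rightarrow> 'a \<Rightarrow> 'a) \<Rightarrow> ('a \<Rightarrow> 'a \<Rightarrow> 'a) \<Rightarrow> 'a \<Rightarrow> 'a \<Rightarrow> 'a \<Rightarrow> bool" where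
  "is_base S add mul zero \<alpha> q \<longleftrightarrow>
     q \<in> S_alpha S mul zero \<alpha> \<and>
     (\<forall>\<beta>\<in>S_alpha S mul zero zero. add q \<beta> \<in> S_alpha S mul zero \<alpha>) \<and>
     (\<forall>s\<in>S_alpha S mul zero \<alpha>. \<exists>\<beta>\<in>S_alpha S mul zero zero. s = add q \<beta>)"

definition coordinated :: "'a set \<Rightarrow> ('a \<Rightarrow> 'a \<Rightarrow> 'a) \<Rightarrow> ('a \<Rightarrow> 'a \<Rightarrow> 'a) \<Rightarrow> 'a \<Rightarrow> bool" where
  "coordinated S add mul zero \<longleftrightarrow>
     S_alpha S mul zero zero \<noteq> {} \<and>
     (\<forall>\<alpha>\<in>S_Lambda S mul zero. \<exists>q. is_base S add mul zero \<alpha> q)"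

definition standard_bases :: "'a set \<Rightarrow> ('a \<Rightarrow> 'a \<Rightarrow> 'a) \<Rightarrow> ('a \<Rightarrow> 'a \<Rightarrow> 'a) \<Rightarrow> 'a \<Rightarrow> 'a \<Rightarrow> bool" where
  "standard_bases S add mul zero one \<longleftrightarrow>
     coordinated S add mul zero \<and>
     (\<exists>q01. q01 \<in> S_alpha S mul zero one \<and> is_base S add mul zero one q01 \<and>
        (\<forall>\<alpha>\<in>S_Lambda S mul zero.
           ssub S add zero (mul \<alpha> (add q01 one)) one \<in> S_alpha S mul zero \<alpha> \<and>
           is_base S add mul zero \<alpha> (ssub S add zero (mul \<alpha> (add q01 one)) one)))"

definition essential_S_structure :: "'a set \<Rightarrow> ('a \<Rightarrow> 'a \<Rightarrow> 'a) \<Rightarrow> ('a \<Rightarrow> 'a \<Rightarrow> 'a) \<Rightarrow> 'a \<Rightarrow> 'a \<Rightarrow> bool" where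
  "essential_S_structure S add mul zero one \<longleftrightarrow>
     S_structure S add mul zero \<and> one \<in> S \<and>
     S_commutative S mul \<and>
     wheel_distributive S add mul zero \<and>
     S_associative S add mul zero one \<and>
     standard_bases S add mul zero one \<and>
     zero \<in> S_alpha S mul zero zero \<and> one \<in> S_alpha S mul zero zero \<and>
     S_alpha S mul zero zero = {mul one x | x. x \<in> S_alpha S mul zero zero}"

definition is_unity :: "'a set \<Rightarrow> ('a \<Rightarrow> 'a \<Rightarrow> 'a) \<Rightarrow> 'a \<Rightarrow> 'a \<Rightarrow> bool" where
  "is_unity S mul zero e \<longleftrightarrow>
     e \<in> S_Lambda S mul zero \<and> (\<forall>s\<in>S. mul e s = s \<and> mul s e = s)"

definition S_ring :: "'a set \<Rightarrow> ('a \<Rightarrow> 'a \<Rightarrow> 'a) \<Rightarrow> ('a \<Rightarrow> 'a \<Rightarrow> 'a) \<Rightarrow> 'a \<Rightarrow> 'a \<Rightarrow> bool" where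
  "S_ring S add mul zero one \<longleftrightarrow>
     essential_S_structure S add mul zero one \<and> (\<exists>e. is_unity S mul zero e)"

end

theory Submission
  imports Defs
begin

lemma sneg_prop:
  assumes G: "comm_group_on S add zero" and s: "s \<in> S"
  shows "sneg S add zero s \<in> S \<and> add s (sneg S add zero s) = zero"
proof -
  from G s obtain t where t: "t \<in> S" "add s t = zero" unfolding comm_group_on_def by blast
  have A: "\<forall>a\<in>S. \<forall>b\<in>S. \<forall>c\<in>S. add (add a b) c = add a (add b c)"
    and C: "\<forall>a\<in>S. \<forall>b\<in>S. add a b = add b a"
    and Z: "\<forall>a\<in>S. add zero a = a \<and> add a zero = a"
    using G unfolding comm_group_on_def by auto
  have uniq: "t' = t" if "t' \<in> S" "add s t' = zero" for t'
  proof -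
    have "t' = add t' zero" using Z that(1) by simp
    also have "\<dots> = add t' (add s t)" using t by simp
    also have "\<dots> = add (add t' s) t" using A that(1) t(1) s by simp
    also have "\<dots> = add (add s t') t" using C that(1) s by simp
    also have "\<dots> = t" using Z that t by simp
    finally show ?thesis .
  qed
  have "(THE t. t \<in> S \<and> add s t = zero) = t"
    apply (rule the_equality)
    using t apply blast
    using uniq apply blast
    done
  then show ?thesis unfolding sneg_def using t by simp
qed

theorem theorem3p2p2:
  fixes S :: "'a set" and add mul :: "'a \<Rightarrow> 'a \<Rightarrow> 'a" and zero one :: 'a
  assumes "S_ring S add mul zero one"
  shows "zero \<noteq> one"
proof
  assume eq: "zero = one"
  have E: "essential_S_structure S add mul zero one" and "\<exists>e. is_unity S mul zero e"
    using assms unfolding S_ring_def by auto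
  then obtain e where e: "is_unity S mul zero e" by blast
  have SS: "S_structure S add mul zero" and comm: "S_commutative S mul"
    and SA: "S_associative S add mul zero one"
    and z0: "zero \<in> S_alpha S mul zero zero"
    and S0: "S_alpha S mul zero zero = {mul one x | x. x \<in> S_alpha S mul zero zero}"
    using E unfolding essential_S_structure_def by blast+
  have G: "comm_group_on S add zero" using SS unfolding S_structure_def by auto
  have zS: "zero \<in> S" using G unfolding comm_group_on_def by auto
  have eS: "e \<in> S" using e unfolding is_unity_def S_Lambda_def by auto
  have "e \<in> S_alpha S mul zero zero"
    using e zS eS unfolding is_unity_def S_alpha_def by auto
  then have "e \<in> {mul one x | x. x \<in> S_alpha S mul zero zero}" by (rule subst[where P="\<lambda>A. e \<in> A", OF S0])
  then obtain x where x: "x \<in> S_alpha S mul zero zero" "e = mul one x" by blast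
  have "mul zero x = zero" using x(1) unfolding S_alpha_def by blast
  hence ez: "e = zero" using eq x(2) by simp
  have unit: "\<And>s. s \<in> S \<Longrightarrow> mul zero s = s \<and> mul s zero = s" using e ez unfolding is_unity_def by auto
  obtain s where s: "s \<in> S" "mul zero s \<noteq> zero \<or> mul s zero \<noteq> zero"
    using SS unfolding S_structure_def by auto
  have snz: "s \<noteq> zero" using s unit zS by auto
  have n0: "sneg S add zero zero = zero"
  proof -
    have "sneg S add zero zero \<in> S" "add zero (sneg S add zero zero) = zero"
      using sneg_prop[OF G zS] by auto
    thus ?thesis using G unfolding comm_group_on_def by auto
  qed
  have ss00: "ssub S add zero zero zero = zero"
    unfolding ssub_def n0 using G zS unfolding comm_group_on_def by auto
  have sss: "ssub S add zero s s = zero"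
    unfolding ssub_def using sneg_prop[OF G s(1)] by auto
  have "mul zero (mul zero s) = ssub S add zero (mul (mul zero zero) s)
          (mul (mul (ssub S add zero zero one) (ssub S add zero zero one)) (mul zero s))"
    using SA z0 s(1) unfolding S_associative_def by blast
  moreover have "mul zero (mul zero s) = s" using unit s(1) by simp
  moreover have "mul zero zero = zero" using unit zS by blast
  moreover have "mul zero s = s" using unit s(1) by blast
  ultimately have "s = ssub S add zero s s" using ss00 eq by simp
  hence "s = zero" using sss by simp
  thus False using snz by simp
qed

end
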